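(* Let $k\ge 2$ and let $G=(V,E,w)$ be a $k$-colorable graph with positive vertex weights that is a $(k-1)$-stable instance of \texttt{MIS}. Then every optimal solution $x$ of the standard LP relaxation of \texttt{MIS} for $G$ that is half-integral ($x_u\in\{0,\tfrac12,1\}$ for all $u$) is integral, i.e. $x_u\in\{0,1\}$ for all $u\in V$ (and hence is the indicator vector of the maximum weight independent set).
   Context: \texttt{MIS}: given a graph $G=(V,E)$ with weights $w:V\to\mathbb{R}_{>0}$, find an independent set maximizing $w(I)=\sum_{u\in I}w_u$. The standard LP relaxation: maximize $\sum_{u\in V}w_ux_u$ subject to $x_u+x_v\le1$ for $(u,v)\in E$, $x_u\in[0,1]$ for $u\in V$ (it is known to always have a half-integral optimal solution). For $\gamma\ge1$, a $\gamma$-perturbation of $w$ is any $w':V\to\mathbb{R}$ with $w_u\le w'_u\le\gamma w_u$ for all $u$. The instance $G=(V,E,w)$ is $\gamma$-stable if it has a unique maximum weight independent set $I^*$ and $I^*$ remains the unique maximum weight independent set of $(V,E,w')$ for every $\gamma$-perturbation $w'$ of $w$. *)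

theory Defs
  imports Complex_Main
begin

text \<open>A graph is given by a finite vertex set V and an edge set E of (ordered) pairs
  of vertices; edge (u,v) imposes the same constraint as (v,u).\<close>

definition graph :: "'a set \<Rightarrow> ('a \<times> 'a) set \<Rightarrow> bool" where
  "graph V E \<longleftrightarrow> finite V \<and> E \<subseteq> V \<times> V \<and> (\<forall>(u,v)\<in>E. u \<noteq> v)"

definition independent :: "'a set \<Rightarrow> ('a \<times> 'a) set \<Rightarrow> 'a set \<Rightarrow> bool" where
  "independent V E I \<longleftrightarrow> I \<subseteq> V \<and> (\<forall>(u,v)\<in>E. \<not> (u \<in> I \<and> v \<in> I))"

definition max_weight_is :: "'a set \<Rightarrow> ('a \<times> 'a) set \<Rightarrow> ('a \<Rightarrow> real) \<Rightarrow> 'a set \<Rightarrow> bool" where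
  "max_weight_is V E w I \<longleftrightarrow> independent V E I \<and>
     (\<forall>J. independent V E J \<longrightarrow> sum w J \<le> sum w I)"

definition unique_max_is :: "'a set \<Rightarrow> ('a \<times> 'a) set \<Rightarrow> ('a \<Rightarrow> real) \<Rightarrow> 'a set \<Rightarrow> bool" where
  "unique_max_is V E w I \<longleftrightarrow> max_weight_is V E w I \<and>
     (\<forall>J. max_weight_is V E w J \<longrightarrow> J = I)"

definition perturbation :: "'a set \<Rightarrow> real \<Rightarrow> ('a \<Rightarrow> real) \<Rightarrow> ('a \<Rightarrow> real) \<Rightarrow> bool" where
  "perturbation V \<gamma> w w' \<longleftrightarrow> (\<forall>u\<in>V. w u \<le> w' u \<and> w' u \<le> \<gamma> * w u)"

definition stable :: "'a set \<Rightarrow> ('a \<times> 'a) set \<Rightarrow> ('a \<Rightarrow> real) \<Rightarrow> real \<Rightarrow> bool" where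
  "stable V E w \<gamma> \<longleftrightarrow> (\<exists>I. unique_max_is V E w I \<and>
     (\<forall>w'. perturbation V \<gamma> w w' \<longrightarrow> unique_max_is V E w' I))"

definition colorable :: "'a set \<Rightarrow> ('a \<times> 'a) set \<Rightarrow> nat \<Rightarrow> bool" where
  "colorable V E k \<longleftrightarrow> (\<exists>c :: 'a \<Rightarrow> nat. (\<forall>u\<in>V. c u < k) \<and> (\<forall>(u,v)\<in>E. c u \<noteq> c v))"

definition lp_feasible :: "'a set \<Rightarrow> ('a \<times> 'a) set \<Rightarrow> ('a \<Rightarrow> real) \<Rightarrow> bool" where
  "lp_feasible V E x \<longleftrightarrow> (\<forall>u\<in>V. 0 \<le> x u \<and> x u \<le> 1) \<and> (\<forall>(u,v)\<in>E. x u + x v \<le> 1)"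

definition lp_optimal :: "'a set \<Rightarrow> ('a \<times> 'a) set \<Rightarrow> ('a \<Rightarrow> real) \<Rightarrow> ('a \<Rightarrow> real) \<Rightarrow> bool" where
  "lp_optimal V E w x \<longleftrightarrow> lp_feasible V E x \<and>
     (\<forall>y. lp_feasible V E y \<longrightarrow> (\<Sum>u\<in>V. w u * y u) \<le> (\<Sum>u\<in>V. w u * x u))"

end

theory Submission
  imports Defs
begin

lemma ind_feasible:
  assumes "independent V E J"
  shows "lp_feasible V E (\<lambda>u. if u \<in> J then 1 else 0)"
  using assms unfolding lp_feasible_def independent_def by auto

lemma ind_value:
  fixes w :: "'a \<Rightarrow> real"
  assumes "finite V" "J \<subseteq> V"
  shows "(\<Sum>u\<in>V. w u * (if u \<in> J then 1 else 0)) = sum w J"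
proof -
  have "(\<Sum>u\<in>V. w u * (if u \<in> J then 1 else 0)) = (\<Sum>u\<in>V. if u \<in> J then w u else 0)"
    by (rule sum.cong) simp_all
  also have "\<dots> = sum w {u\<in>V. u \<in> J}" using assms(1) by (simp add: sum.inter_filter)
  also have "{u\<in>V. u \<in> J} = J" using assms(2) by auto
  finally show ?thesis .
qed

lemma stab_ineq:
  assumes fin: "finite V" and k: "k \<ge> 2" and pos: "\<forall>u\<in>V. w u > 0"
    and st: "\<forall>w'. perturbation V (real k - 1) w w' \<longrightarrow> unique_max_is V E w' I"
    and IV: "I \<subseteq> V"
    and J: "independent V E J" and ne: "J \<noteq> I"
  shows "(real k - 1) * sum w (J - I) < sum w (I - J)"
proof -
  define w' where "w' = (\<lambda>u. if u \<in> I then w u else (real k - 1) * w u)"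
  have "perturbation V (real k - 1) w w'"
    unfolding perturbation_def w'_def using pos k
    by (auto simp: algebra_simps)
  hence u: "unique_max_is V E w' I" using st by blast
  have JV: "J \<subseteq> V" using J unfolding independent_def by auto
  have "\<not> max_weight_is V E w' J" using u ne unfolding unique_max_is_def by blast
  then obtain J' where "independent V E J'" "sum w' J' > sum w' J"
    using J unfolding max_weight_is_def by auto
  moreover have "sum w' J' \<le> sum w' I" using u calculation(1)
    unfolding unique_max_is_def max_weight_is_def by blast
  ultimately have lt: "sum w' J < sum w' I" by linarith
  have fJ: "finite J" using JV fin finite_subset by blast
  have fI: "finite I" using IV fin finite_subset by blast
  have "sum w' J = sum w' (J \<inter> I) + sum w' (J - I)"
    using fJ by (metis Int_Diff_Un Int_Diff_disjoint finite_Int finite_Diff sum.union_disjoint)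
  also have "sum w' (J \<inter> I) = sum w (J \<inter> I)" by (rule sum.cong) (auto simp: w'_def)
  also have "sum w' (J - I) = (real k - 1) * sum w (J - I)"
    by (simp add: sum_distrib_left w'_def)
  finally have a: "sum w' J = sum w (J \<inter> I) + (real k - 1) * sum w (J - I)" .
  have "sum w' I = sum w I" by (rule sum.cong) (auto simp: w'_def)
  also have "sum w I = sum w (I \<inter> J) + sum w (I - J)"
    using fI by (metis Int_Diff_disjoint finite_Int finite_Diff sum.union_disjoint Int_Diff_Un)
  finally have b: "sum w' I = sum w (I \<inter> J) + sum w (I - J)" .
  show ?thesis using lt a b by (simp add: Int_commute)
qed

theorem mainTheorem2:
  fixes V :: "'a set" and E :: "('a \<times> 'a) set" and w :: "'a \<Rightarrow> real"
    and k :: nat and x :: "'a \<Rightarrow> real"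
  assumes "k \<ge> 2"
    and "graph V E"
    and "\<forall>u\<in>V. w u > 0"
    and "colorable V E k"
    and "stable V E w (real k - 1)"
    and "lp_optimal V E w x"
    and "\<forall>u\<in>V. x u \<in> {0, 1/2, 1}"
  shows "\<forall>u\<in>V. x u \<in> {0, 1}"
proof (rule ccontr)
  assume "\<not> ?thesis"
  then obtain h where hV: "h \<in> V" and hx: "x h = 1/2" using assms(7) by auto
  have fin: "finite V" using assms(2) unfolding graph_def by auto
  obtain I where uI: "unique_max_is V E w I"
    and st: "\<forall>w'. perturbation V (real k - 1) w w' \<longrightarrow> unique_max_is V E w' I"
    using assms(5) unfolding stable_def by blast
  have indI: "independent V E I" using uI unfolding unique_max_is_def max_weight_is_def by blast
  have IV: "I \<subseteq> V" using indI unfolding independent_def by auto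
  obtain c :: "'a \<Rightarrow> nat" where cV: "\<forall>u\<in>V. c u < k" and cE: "\<forall>(u,v)\<in>E. c u \<noteq> c v"
    using assms(4) unfolding colorable_def by blast
  have feas: "lp_feasible V E x" and opt: "\<And>y. lp_feasible V E y \<Longrightarrow>
      (\<Sum>u\<in>V. w u * y u) \<le> (\<Sum>u\<in>V. w u * x u)"
    using assms(6) unfolding lp_optimal_def by auto
  have EV: "E \<subseteq> V \<times> V" using assms(2) unfolding graph_def by auto
  define V1 where "V1 = {u\<in>V. x u = 1}"
  define H where "H = {u\<in>V. x u = 1/2}"
  have edge: "x u + x v \<le> 1" if "(u,v) \<in> E" for u v using feas that unfolding lp_feasible_def by auto
  have LPval: "(\<Sum>u\<in>V. w u * x u) = sum w V1 + sum w H / 2"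
  proof -
    have "(\<Sum>u\<in>V. w u * x u) = (\<Sum>u\<in>V. (if x u = 1 then w u else 0) + (if x u = 1/2 then w u else 0) / 2)"
      by (rule sum.cong) (use assms(7) in auto)
    also have "\<dots> = (\<Sum>u\<in>V. if x u = 1 then w u else 0) + (\<Sum>u\<in>V. if x u = 1/2 then w u else 0) / 2"
      by (simp add: sum.distrib sum_divide_distrib)
    also have "\<dots> = sum w V1 + sum w H / 2"
      using fin unfolding V1_def H_def by (simp add: sum.inter_filter)
    finally show ?thesis .
  qed
  have fV1: "finite V1" "finite H" using fin unfolding V1_def H_def by auto
  have disj: "V1 \<inter> H = {}" unfolding V1_def H_def by auto
  have indJ: "independent V E (V1 \<union> S)" if SH: "S \<subseteq> H" and Sind: "\<forall>(u,v)\<in>E. \<not>(u \<in> S \<and> v \<in> S)" for S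
    unfolding independent_def
  proof (intro conjI ballI)
    show "V1 \<union> S \<subseteq> V" using SH unfolding V1_def H_def by auto
    fix p assume p: "p \<in> E"
    obtain u v where [simp]: "p = (u,v)" by force
    have "x u + x v \<le> 1" using edge p by simp
    thus "case p of (u, v) \<Rightarrow> \<not> (u \<in> V1 \<union> S \<and> v \<in> V1 \<union> S)"
      using Sind p SH unfolding V1_def H_def by auto
  qed
  have valJ: "sum w (V1 \<union> S) \<le> sum w V1 + sum w H / 2" if "independent V E (V1 \<union> S)" for S
  proof -
    have "V1 \<union> S \<subseteq> V" using that unfolding independent_def by auto
    hence "sum w (V1 \<union> S) = (\<Sum>u\<in>V. w u * (if u \<in> V1 \<union> S then 1 else 0))"
      using fin ind_value by metis
    also have "\<dots> \<le> sum w V1 + sum w H / 2" using opt[OF ind_feasible[OF that]] LPval by simp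
    finally show ?thesis .
  qed
  define Q where "Q = I \<inter> H"
  define R where "R = I - V1 - H"
  define A where "A = V1 - I"
  define P where "P = V1 \<inter> I"
  define B where "B = H - I"
  have fin2: "finite Q" "finite R" "finite A" "finite P" "finite B"
    using fin IV fV1 unfolding Q_def R_def A_def P_def B_def by (auto intro: finite_subset)
  have QH: "Q \<subseteq> H" unfolding Q_def by auto
  have Qind: "\<forall>(u,v)\<in>E. \<not>(u \<in> Q \<and> v \<in> Q)" using indI unfolding independent_def Q_def by auto
  have "sum w (V1 \<union> Q) \<le> sum w V1 + sum w H / 2" using valJ indJ[OF QH Qind] by blast
  moreover have "sum w (V1 \<union> Q) = sum w V1 + sum w Q"
    using fV1 fin2 disj QH by (meson disjoint_iff subsetD sum.union_disjoint)
  moreover have HQB: "sum w H = sum w Q + sum w B"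
    using fV1 fin2 unfolding Q_def B_def by (metis Int_Diff_Un Int_Diff_disjoint Int_commute sum.union_disjoint)
  ultimately have qb: "sum w Q \<le> sum w B" by linarith
  have "sum w I = (\<Sum>u\<in>V. w u * (if u \<in> I then 1 else 0))" using fin IV ind_value by metis
  also have "\<dots> \<le> sum w V1 + sum w H / 2" using opt[OF ind_feasible[OF indI]] LPval by simp
  finally have LI: "sum w I \<le> sum w V1 + sum w H / 2" .
  have I_dec: "I = P \<union> Q \<union> R" unfolding P_def Q_def R_def by auto
  have sI: "sum w I = sum w P + sum w Q + sum w R"
  proof -
    have "sum w I = sum w (P \<union> Q) + sum w R" unfolding I_dec
      by (rule sum.union_disjoint) (use fin2 in \<open>auto simp: P_def Q_def R_def\<close>)
    also have "sum w (P \<union> Q) = sum w P + sum w Q"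
      by (rule sum.union_disjoint) (use fin2 disj in \<open>auto simp: P_def Q_def\<close>)
    finally show ?thesis .
  qed
  have sV1: "sum w V1 = sum w P + sum w A"
    using fV1 unfolding P_def A_def by (metis Int_Diff_Un Int_Diff_disjoint sum.union_disjoint finite_Int finite_Diff)
  have LP2: "sum w R + sum w Q / 2 \<le> sum w A + sum w B / 2" using LI sI sV1 HQB by linarith
  define C where "C i = {u\<in>H. c u = i}" for i
  define f where "f i = (real k - 1) * sum w ((V1 \<union> C i) - I) - sum w (I - (V1 \<union> C i))" for i
  have Cind: "\<forall>(u,v)\<in>E. \<not>(u \<in> C i \<and> v \<in> C i)" for i using cE unfolding C_def by auto
  have CH: "C i \<subseteq> H" for i unfolding C_def by auto
  have fle: "f i \<le> 0" for i
  proof (cases "V1 \<union> C i = I")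
    case True thus ?thesis by (simp add: f_def)
  next
    case False
    show ?thesis using stab_ineq[OF fin assms(1) assms(3) st IV indJ[OF CH Cind] False]
      unfolding f_def by linarith
  qed
  have hH: "h \<in> H" using hV hx unfolding H_def by auto
  have "\<exists>i<k. f i < 0"
  proof -
    have ck: "c h < k" using cV hV by auto
    obtain j where j: "j < k" "j \<noteq> c h"
    proof (cases "c h = 0")
      case True thus ?thesis using that[of 1] assms(1) by auto
    next
      case False thus ?thesis using that[of 0] ck by auto
    qed
    have "h \<in> C (c h)" "h \<notin> C j" using hH j unfolding C_def by auto
    moreover have "h \<notin> V1" using hH disj by auto
    ultimately have "V1 \<union> C (c h) \<noteq> V1 \<union> C j" by blast
    hence "V1 \<union> C (c h) \<noteq> I \<or> V1 \<union> C j \<noteq> I" by auto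
    thus ?thesis
    proof
      assume ne: "V1 \<union> C (c h) \<noteq> I"
      show ?thesis using stab_ineq[OF fin assms(1) assms(3) st IV indJ[OF CH Cind] ne] ck
        unfolding f_def by (intro exI[of _ "c h"]) linarith
    next
      assume ne: "V1 \<union> C j \<noteq> I"
      show ?thesis using stab_ineq[OF fin assms(1) assms(3) st IV indJ[OF CH Cind] ne] j
        unfolding f_def by (intro exI[of _ j]) linarith
    qed
  qed
  then obtain i0 where "i0 < k" "f i0 < 0" by blast
  hence sumf: "(\<Sum>i<k. f i) < 0"
  proof -
    have "(\<Sum>i<k. f i) = f i0 + (\<Sum>i\<in>{..<k} - {i0}. f i)"
      using \<open>i0 < k\<close> by (simp add: sum.remove)
    also have "(\<Sum>i\<in>{..<k} - {i0}. f i) \<le> 0" by (rule sum_nonpos) (use fle in auto)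
    finally show ?thesis using \<open>f i0 < 0\<close> by linarith
  qed
  have grp: "(\<Sum>i<k. sum w {u\<in>S. c u = i}) = sum w S" if "finite S" "S \<subseteq> V" for S
    by (rule sum.group) (use that cV in auto)
  have e1: "sum w ((V1 \<union> C i) - I) = sum w A + sum w {u\<in>B. c u = i}" for i
  proof -
    have "(V1 \<union> C i) - I = A \<union> {u\<in>B. c u = i}" unfolding A_def B_def C_def by auto
    moreover have "A \<inter> {u\<in>B. c u = i} = {}" using disj unfolding A_def B_def by auto
    ultimately show ?thesis using fin2 by (simp add: sum.union_disjoint)
  qed
  have e2: "sum w (I - (V1 \<union> C i)) = sum w R + sum w Q - sum w {u\<in>Q. c u = i}" for i
  proof -
    have "I - (V1 \<union> C i) = R \<union> (Q - {u\<in>Q. c u = i})" using disj unfolding R_def Q_def C_def by auto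
    moreover have "R \<inter> (Q - {u\<in>Q. c u = i}) = {}" unfolding R_def Q_def by auto
    ultimately have "sum w (I - (V1 \<union> C i)) = sum w R + sum w (Q - {u\<in>Q. c u = i})"
      using fin2 by (simp add: sum.union_disjoint)
    also have "sum w (Q - {u\<in>Q. c u = i}) = sum w Q - sum w {u\<in>Q. c u = i}"
      using fin2 by (simp add: sum_diff)
    finally show ?thesis by simp
  qed
  have BV: "B \<subseteq> V" "Q \<subseteq> V" unfolding B_def Q_def H_def by auto
  have "(\<Sum>i<k. f i) = (\<Sum>i<k. (real k - 1) * sum w A + (real k - 1) * sum w {u\<in>B. c u = i}
       - sum w R - sum w Q + sum w {u\<in>Q. c u = i})"
    unfolding f_def e1 e2 by (simp add: algebra_simps)
  also have "\<dots> = real k * ((real k - 1) * sum w A) + (real k - 1) * sum w B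
       - real k * sum w R - real k * sum w Q + sum w Q"
    using grp[OF fin2(5) BV(1)] grp[OF fin2(1) BV(2)]
    by (simp add: sum.distrib sum_subtractf sum_distrib_left[symmetric])
  finally have S: "(\<Sum>i<k. f i) = real k * ((real k - 1) * sum w A) + (real k - 1) * sum w B
       - real k * sum w R - real k * sum w Q + sum w Q" .
  have A0: "sum w A \<ge> 0" using assms(3) unfolding A_def V1_def
    by (intro sum_nonneg) (auto intro: less_imp_le)
  have k2: "real k \<ge> 2" using assms(1) by simp
  have "real k * sum w R \<le> real k * (sum w A + sum w B / 2 - sum w Q / 2)"
    using LP2 k2 by (intro mult_left_mono) auto
  moreover have "real k * (real k - 2) * sum w A \<ge> 0" using A0 k2 by auto
  moreover have "(real k - 2) * (sum w B - sum w Q) \<ge> 0" using qb k2 by auto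
  ultimately have "(\<Sum>i<k. f i) \<ge> 0" unfolding S by (simp add: algebra_simps)
  thus False using sumf by linarith
qed

end
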